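(* Let $G$ be a connected graph. Then $\mathcal{Z}^{\mathrm{TE}}_+(G)=\mathcal{Z}^{\mathrm{TS}}_+(G)$ if and only if $G\cong K_n$ for some $n$.
   Context: PSD forcing: vertices are colored blue or white; if $B$ is the current set of blue vertices, $C$ a connected component of $G-B$, and $u$ a blue vertex with $N_G(u)\cap V(C)=\{v\}$, then $u$ may force $v$ to become blue. A PSD forcing set is a set of initially blue vertices from which repeated application of this rule turns every vertex blue; $\mathrm{Z}_+(G)$ is the minimum size of a PSD forcing set. $\mathcal{Z}^{\mathrm{TE}}_+(G)$ has as vertices the minimum PSD forcing sets of $G$, with $S_1S_2$ an edge iff $S_1\setminus S_2=\{v_1\}$ and $S_2\setminus S_1=\{v_2\}$ for some vertices $v_1,v_2$; $\mathcal{Z}^{\mathrm{TS}}_+(G)$ has the same vertex set with the additional adjacency requirement $v_1v_2\in E(G)$. *)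

theory Defs
  imports Main
begin

definition simple_graph :: "'a set \<Rightarrow> ('a \<Rightarrow> 'a \<Rightarrow> bool) \<Rightarrow> bool" where
  "simple_graph V E \<longleftrightarrow> finite V \<and> (\<forall>x y. E x y \<longrightarrow> x \<in> V \<and> y \<in> V)
     \<and> (\<forall>x y. E x y \<longrightarrow> E y x) \<and> (\<forall>x. \<not> E x x)"

definition reach_in :: "'a set \<Rightarrow> ('a \<Rightarrow> 'a \<Rightarrow> bool) \<Rightarrow> 'a \<Rightarrow> 'a \<Rightarrow> bool" where
  "reach_in W E = (\<lambda>x y. x \<in> W \<and> y \<in> W \<and> E x y)\<^sup>*\<^sup>*"

definition connected_graph :: "'a set \<Rightarrow> ('a \<Rightarrow> 'a \<Rightarrow> bool) \<Rightarrow> bool" where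
  "connected_graph V E \<longleftrightarrow> simple_graph V E \<and> V \<noteq> {}
     \<and> (\<forall>x\<in>V. \<forall>y\<in>V. reach_in V E x y)"

definition components_minus :: "'a set \<Rightarrow> ('a \<Rightarrow> 'a \<Rightarrow> bool) \<Rightarrow> 'a set \<Rightarrow> 'a set set" where
  "components_minus V E B = {{y. reach_in (V - B) E w y} | w. w \<in> V - B}"

definition psd_force_step :: "'a set \<Rightarrow> ('a \<Rightarrow> 'a \<Rightarrow> bool) \<Rightarrow> 'a set \<Rightarrow> 'a set \<Rightarrow> bool" where
  "psd_force_step V E B B' \<longleftrightarrow> (\<exists>C u v. C \<in> components_minus V E B \<and> u \<in> B
     \<and> {w. E u w} \<inter> C = {v} \<and> B' = insert v B)"

definition psd_forcing_set :: "'a set \<Rightarrow> ('a \<Rightarrow> 'a \<Rightarrow> bool) \<Rightarrow> 'a set \<Rightarrow> bool" where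
  "psd_forcing_set V E S \<longleftrightarrow> S \<subseteq> V \<and> (\<exists>B. (psd_force_step V E)\<^sup>*\<^sup>* S B \<and> V \<subseteq> B)"

definition Z_plus :: "'a set \<Rightarrow> ('a \<Rightarrow> 'a \<Rightarrow> bool) \<Rightarrow> nat" where
  "Z_plus V E = (LEAST k. \<exists>S. psd_forcing_set V E S \<and> card S = k)"

definition min_psd_forcing_sets :: "'a set \<Rightarrow> ('a \<Rightarrow> 'a \<Rightarrow> bool) \<Rightarrow> 'a set set" where
  "min_psd_forcing_sets V E = {S. psd_forcing_set V E S \<and> card S = Z_plus V E}"

text \<open>Token exchange and token sliding reconfiguration graphs, as
  (vertex set, adjacency relation) pairs.\<close>
definition ZTE_plus :: "'a set \<Rightarrow> ('a \<Rightarrow> 'a \<Rightarrow> bool) \<Rightarrow> 'a set set \<times> ('a set \<Rightarrow> 'a set \<Rightarrow> bool)" where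
  "ZTE_plus V E = (min_psd_forcing_sets V E,
     \<lambda>S1 S2. S1 \<in> min_psd_forcing_sets V E \<and> S2 \<in> min_psd_forcing_sets V E
       \<and> (\<exists>v1 v2. S1 - S2 = {v1} \<and> S2 - S1 = {v2}))"

definition ZTS_plus :: "'a set \<Rightarrow> ('a \<Rightarrow> 'a \<Rightarrow> bool) \<Rightarrow> 'a set set \<times> ('a set \<Rightarrow> 'a set \<Rightarrow> bool)" where
  "ZTS_plus V E = (min_psd_forcing_sets V E,
     \<lambda>S1 S2. S1 \<in> min_psd_forcing_sets V E \<and> S2 \<in> min_psd_forcing_sets V E
       \<and> (\<exists>v1 v2. S1 - S2 = {v1} \<and> S2 - S1 = {v2} \<and> E v1 v2))"

definition graph_iso :: "'a set \<Rightarrow> ('a \<Rightarrow> 'a \<Rightarrow> bool) \<Rightarrow> 'b set \<Rightarrow> ('b \<Rightarrow> 'b \<Rightarrow> bool) \<Rightarrow> bool" where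
  "graph_iso V E W F \<longleftrightarrow> (\<exists>f. bij_betw f V W \<and> (\<forall>x\<in>V. \<forall>y\<in>V. E x y \<longleftrightarrow> F (f x) (f y)))"

definition K_verts :: "nat \<Rightarrow> nat set" where "K_verts n = {0..<n}"
definition K_edges :: "nat \<Rightarrow> nat \<Rightarrow> nat \<Rightarrow> bool" where
  "K_edges n x y \<longleftrightarrow> x < n \<and> y < n \<and> x \<noteq> y"

end

theory Submission
  imports Defs
begin



definition cmp :: "'a set \<Rightarrow> ('a \<Rightarrow> 'a \<Rightarrow> bool) \<Rightarrow> 'a set \<Rightarrow> 'a \<Rightarrow> 'a set" where
  "cmp V E S w = {y. reach_in (V - S) E w y}"

lemma comps_iff: "C \<in> components_minus V E S \<longleftrightarrow> (\<exists>w\<in>V-S. C = cmp V E S w)"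
  by (auto simp: components_minus_def cmp_def)

lemma reach_ends: "reach_in W E x y \<Longrightarrow> x \<noteq> y \<Longrightarrow> x \<in> W \<and> y \<in> W"
  unfolding reach_in_def by (induction rule: rtranclp_induct) auto

lemma reach_refl: "reach_in W E x x"
  unfolding reach_in_def by simp

lemma reach_trans: "reach_in W E x y \<Longrightarrow> reach_in W E y z \<Longrightarrow> reach_in W E x z"
  unfolding reach_in_def by simp

lemma reach_step: "reach_in W E x y \<Longrightarrow> y \<in> W \<Longrightarrow> z \<in> W \<Longrightarrow> E y z \<Longrightarrow> reach_in W E x z"
  unfolding reach_in_def by (simp add: rtranclp.rtrancl_into_rtrancl)

lemma reach_sym: assumes "simple_graph V E" "reach_in W E x y" shows "reach_in W E y x"
  using assms(2) unfolding reach_in_def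
proof (induction rule: rtranclp_induct)
  case base then show ?case by simp
next
  case (step y z)
  have "E z y" using step(2) assms(1) by (auto simp: simple_graph_def)
  have "(\<lambda>x y. x \<in> W \<and> y \<in> W \<and> E x y) z y" using step(2) \<open>E z y\<close> by simp
  then show ?case using step(3) by (rule converse_rtranclp_into_rtranclp)
qed

lemma reach_mono: "W \<subseteq> W' \<Longrightarrow> reach_in W E x y \<Longrightarrow> reach_in W' E x y"
  unfolding reach_in_def by (erule mono_rtranclp[rule_format, rotated]) auto

lemma cmp_self: "w \<in> cmp V E S w" by (simp add: cmp_def reach_refl)

lemma cmp_sub: "w \<in> V - S \<Longrightarrow> cmp V E S w \<subseteq> V - S"
  unfolding cmp_def using reach_ends by fastforce

lemma cmp_closed: "w \<in> V - S \<Longrightarrow> x \<in> cmp V E S w \<Longrightarrow> y \<in> V - S \<Longrightarrow> E x y \<Longrightarrow> y \<in> cmp V E S w"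
  unfolding cmp_def using reach_step reach_ends by (metis mem_Collect_eq)

lemma cmp_eq: assumes "simple_graph V E" "x \<in> cmp V E S w" shows "cmp V E S x = cmp V E S w"
proof -
  have r: "reach_in (V - S) E w x" using assms(2) by (simp add: cmp_def)
  have r': "reach_in (V - S) E x w" using reach_sym[OF assms(1) r] .
  show ?thesis
  proof (rule set_eqI)
    fix y
    show "y \<in> cmp V E S x \<longleftrightarrow> y \<in> cmp V E S w"
    proof
      assume "y \<in> cmp V E S x"
      then have "reach_in (V - S) E x y" by (simp add: cmp_def)
      then have "reach_in (V - S) E w y" by (rule reach_trans[OF r])
      then show "y \<in> cmp V E S w" by (simp add: cmp_def)
    next
      assume "y \<in> cmp V E S w"
      then have "reach_in (V - S) E w y" by (simp add: cmp_def)
      then have "reach_in (V - S) E x y" by (rule reach_trans[OF r'])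
      then show "y \<in> cmp V E S x" by (simp add: cmp_def)
    qed
  qed
qed

lemma cmp_mono: assumes "S \<subseteq> S2" shows "cmp V E S2 w \<subseteq> cmp V E S w"
proof
  fix y assume "y \<in> cmp V E S2 w"
  then have r: "reach_in (V - S2) E w y" by (simp add: cmp_def)
  have "V - S2 \<subseteq> V - S" using assms by blast
  then have "reach_in (V - S) E w y" using r by (rule reach_mono)
  then show "y \<in> cmp V E S w" by (simp add: cmp_def)
qed

lemma cmp_isolated: assumes "{y. E v y} \<subseteq> S" shows "cmp V E S v = {v}"
proof -
  have "reach_in (V - S) E v y \<Longrightarrow> y = v" for y
    unfolding reach_in_def by (induction rule: rtranclp_induct) (use assms in auto)
  then show ?thesis unfolding cmp_def by (auto simp: reach_refl)
qed

lemma graph_V: "simple_graph V E \<Longrightarrow> E x y \<Longrightarrow> x \<in> V \<and> y \<in> V"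
  by (simp add: simple_graph_def)
lemma graph_sym: "simple_graph V E \<Longrightarrow> E x y \<Longrightarrow> E y x"
  by (simp add: simple_graph_def)
lemma graph_irr: "simple_graph V E \<Longrightarrow> \<not> E x x"
  by (simp add: simple_graph_def)




lemma force_mono:
  assumes sg: "simple_graph V E" and ch: "(psd_force_step V E)\<^sup>*\<^sup>* B B'" and cov: "V \<subseteq> B'"
  shows "B \<subseteq> B2 \<Longrightarrow> \<exists>B''. (psd_force_step V E)\<^sup>*\<^sup>* B2 B'' \<and> V \<subseteq> B''"
  using ch
proof (induction arbitrary: B2 rule: converse_rtranclp_induct)
  case base
  then show ?case using cov by blast
next
  case (step y z)
  obtain C u v where C: "C \<in> components_minus V E y" and u: "u \<in> y"
    and uv: "{x. E u x} \<inter> C = {v}" and z: "z = insert v y"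
    using step(1) by (auto simp: psd_force_step_def)
  show ?case
  proof (cases "v \<in> B2")
    case True
    then have "z \<subseteq> B2" using z step(4) by auto
    then show ?thesis using step(3) by blast
  next
    case False
    obtain w where w: "w \<in> V - y" and Cw: "C = cmp V E y w" using C comps_iff by metis
    have vC: "v \<in> C" using uv by auto
    then have vV: "v \<in> V - B2" using cmp_sub[OF w] Cw False by auto
    define C2 where "C2 = cmp V E B2 v"
    have "C = cmp V E y v" using cmp_eq[OF sg] vC Cw by metis
    then have C2C: "C2 \<subseteq> C" unfolding C2_def using cmp_mono step(4) by metis
    have "{x. E u x} \<inter> C2 = {v}"
      using C2C uv cmp_self[of v V E B2] unfolding C2_def by auto
    moreover have "C2 \<in> components_minus V E B2" using comps_iff vV C2_def by metis
    moreover have "u \<in> B2" using u step(4) by auto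
    ultimately have st: "psd_force_step V E B2 (insert v B2)"
      unfolding psd_force_step_def by blast
    have "z \<subseteq> insert v B2" using z step(4) by auto
    then obtain B'' where "(psd_force_step V E)\<^sup>*\<^sup>* (insert v B2) B''" "V \<subseteq> B''"
      using step(3) by blast
    then show ?thesis using st converse_rtranclp_into_rtranclp by metis
  qed
qed

lemma reach_lift:
  assumes sg: "simple_graph V E" and d: "cmp V E S x \<inter> B = {}"
    and r: "reach_in (V - S) E x y"
  shows "reach_in (V - B) E x y"
  using r unfolding reach_in_def
proof (induction rule: rtranclp_induct)
  case base then show ?case by simp
next
  case (step y z)
  have "reach_in (V - S) E x y" "reach_in (V - S) E x z"
    using step unfolding reach_in_def by (auto intro: rtranclp.rtrancl_into_rtrancl)
  then have "y \<notin> B" "z \<notin> B" using d unfolding cmp_def by auto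
  then show ?case using step by (auto intro: rtranclp.rtrancl_into_rtrancl)
qed

lemma force_into_comp:
  assumes sg: "simple_graph V E" and ch: "(psd_force_step V E)\<^sup>*\<^sup>* B B'" and cov: "V \<subseteq> B'"
    and w: "w \<in> V - S" and Cw: "C = cmp V E S w"
  shows "S \<subseteq> B \<Longrightarrow> C \<inter> B = {} \<Longrightarrow> \<exists>u\<in>S. \<exists>v. {x. E u x} \<inter> C = {v}"
  using ch
proof (induction rule: converse_rtranclp_induct)
  case base
  then show ?case using cov cmp_self[of w V E S] Cw w by auto
next
  case (step y z)
  obtain C1 u1 v1 where C1: "C1 \<in> components_minus V E y" and u1: "u1 \<in> y"
    and uv: "{x. E u1 x} \<inter> C1 = {v1}" and z: "z = insert v1 y"
    using step(1) by (auto simp: psd_force_step_def)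
  show ?case
  proof (cases "v1 \<in> C")
    case False
    then show ?thesis using step z by auto
  next
    case True
    obtain w1 where w1: "w1 \<in> V - y" and C1w: "C1 = cmp V E y w1" using C1 comps_iff by metis
    have v1C1: "v1 \<in> C1" using uv by auto
    have e1: "C1 = cmp V E y v1" using cmp_eq[OF sg] v1C1 C1w by metis
    have e2: "C = cmp V E S v1" using cmp_eq[OF sg] True Cw by metis
    have "C1 \<subseteq> C" using e1 e2 cmp_mono step(4) by metis
    moreover have "C \<subseteq> C1"
    proof
      fix x assume "x \<in> C"
      then have "reach_in (V - S) E v1 x" using e2 by (simp add: cmp_def)
      then have "reach_in (V - y) E v1 x" using reach_lift[OF sg] e2 step(5) by metis
      then show "x \<in> C1" using e1 by (simp add: cmp_def)
    qed
    ultimately have CC: "C1 = C" by blast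
    have Eu: "E u1 v1" using uv by auto
    have "u1 \<in> S"
    proof (rule ccontr)
      assume "u1 \<notin> S"
      then have "u1 \<in> V - S" using graph_V[OF sg Eu] by auto
      then have "u1 \<in> C" using cmp_closed[OF w] True Cw graph_sym[OF sg Eu] by metis
      then show False using u1 step(5) by auto
    qed
    then show ?thesis using uv CC by blast
  qed
qed

lemma forcing_comp_force:
  assumes sg: "simple_graph V E" and f: "psd_forcing_set V E S"
    and C: "C \<in> components_minus V E S"
  shows "\<exists>u\<in>S. \<exists>v. {x. E u x} \<inter> C = {v}"
proof -
  obtain w where w: "w \<in> V - S" and Cw: "C = cmp V E S w" using C comps_iff by metis
  obtain B' where "(psd_force_step V E)\<^sup>*\<^sup>* S B'" "V \<subseteq> B'" using f psd_forcing_set_def by metis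
  moreover have "C \<inter> S = {}" using cmp_sub[OF w] Cw by auto
  ultimately show ?thesis using force_into_comp[OF sg _ _ w Cw] by blast
qed

lemma swap_forcing:
  assumes sg: "simple_graph V E" and f: "psd_forcing_set V E S" and u: "u \<in> S"
    and C: "C \<in> components_minus V E S" and uv: "{x. E u x} \<inter> C = {v}"
  shows "psd_forcing_set V E (insert v (S - {u}))"
proof -
  define T where "T = insert v (S - {u})"
  obtain w where w: "w \<in> V - S" and Cw: "C = cmp V E S w" using C comps_iff by metis
  have vC: "v \<in> C" using uv by auto
  have CS: "C \<subseteq> V - S" using cmp_sub[OF w] Cw by auto
  have SV: "S \<subseteq> V" using f psd_forcing_set_def by metis
  have TV: "T \<subseteq> V" using SV vC CS T_def by auto
  obtain B' where ch: "(psd_force_step V E)\<^sup>*\<^sup>* S B'" and cov: "V \<subseteq> B'"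
    using f psd_forcing_set_def by metis
  obtain B'' where ch2: "(psd_force_step V E)\<^sup>*\<^sup>* (insert v S) B''" and cov2: "V \<subseteq> B''"
    using force_mono[OF sg ch cov, of "insert v S"] by auto
  have uT: "u \<in> V - T" using u SV vC CS T_def by auto
  have inv: "reach_in (V - T) E u z \<Longrightarrow> z \<notin> C" for z
    unfolding reach_in_def
  proof (induction rule: rtranclp_induct)
    case base then show ?case using u CS by auto
  next
    case (step z z')
    show ?case
    proof
      assume z'C: "z' \<in> C"
      have z'T: "z' \<notin> T" and zT: "z \<in> V - T" and Ezz: "E z z'" using step(2) by auto
      show False
      proof (cases "z = u")
        case True
        then have "z' = v" using uv z'C Ezz by auto
        then show False using z'T T_def by auto
      next
        case False
        then have "z \<in> V - S" using zT T_def by auto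
        then have "z \<in> C" using cmp_closed[OF w] z'C Cw graph_sym[OF sg Ezz] by metis
        then show False using step(3) by simp
      qed
    qed
  qed
  define C' where "C' = cmp V E T u"
  have Evu: "E v u" using uv graph_sym[OF sg] by auto
  have "{x. E v x} \<inter> C' = {u}"
  proof -
    have "y = u" if y: "y \<in> C'" "E v y" for y
    proof (rule ccontr)
      assume ne: "y \<noteq> u"
      have "y \<in> V - T" using y cmp_sub[OF uT] C'_def by auto
      then have "y \<in> V - S" using ne T_def by auto
      then have "y \<in> C" using cmp_closed[OF w] vC Cw y(2) by metis
      moreover have "reach_in (V - T) E u y" using y C'_def by (simp add: cmp_def)
      ultimately show False using inv by blast
    qed
    then show ?thesis using Evu cmp_self[of u V E T] C'_def by auto
  qed
  moreover have "C' \<in> components_minus V E T" using comps_iff uT C'_def by metis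
  moreover have "v \<in> T" using T_def by simp
  ultimately have st: "psd_force_step V E T (insert u T)"
    unfolding psd_force_step_def by blast
  have "insert u T = insert v S" using u T_def by auto
  then have "(psd_force_step V E)\<^sup>*\<^sup>* T B''" using st ch2 converse_rtranclp_into_rtranclp by metis
  then show ?thesis using TV cov2 T_def psd_forcing_set_def by metis
qed

lemma swap_min:
  assumes sg: "simple_graph V E" and f: "S \<in> min_psd_forcing_sets V E" and u: "u \<in> S"
    and C: "C \<in> components_minus V E S" and uv: "{x. E u x} \<inter> C = {v}"
  shows "insert v (S - {u}) \<in> min_psd_forcing_sets V E"
proof -
  have fs: "psd_forcing_set V E S" and cS: "card S = Z_plus V E"
    using f min_psd_forcing_sets_def by auto
  obtain w where w: "w \<in> V - S" and Cw: "C = cmp V E S w" using C comps_iff by metis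
  have "v \<notin> S" using uv cmp_sub[OF w] Cw by auto
  moreover have "finite S" using fs sg psd_forcing_set_def simple_graph_def finite_subset by metis
  moreover have "card S > 0" using u \<open>finite S\<close> card_gt_0_iff by blast
  ultimately have "card (insert v (S - {u})) = card S" using u
    by (simp add: card_Suc_Diff1)
  then show ?thesis using swap_forcing[OF sg fs u C uv] cS min_psd_forcing_sets_def by auto
qed

lemma shrink:
  assumes sg: "simple_graph V E" and u: "u \<in> S"
    and C: "C \<in> components_minus V E S" and uv: "{x. E u x} \<inter> C = {v}"
    and z: "z \<in> C" "z \<noteq> v"
  shows "cmp V E (insert v (S - {u})) z \<subseteq> C - {v}"
proof -
  define T where "T = insert v (S - {u})"
  obtain w where w: "w \<in> V - S" and Cw: "C = cmp V E S w" using C comps_iff by metis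
  have "reach_in (V - T) E z y \<Longrightarrow> y \<in> C - {v}" for y
    unfolding reach_in_def
  proof (induction rule: rtranclp_induct)
    case base then show ?case using z by auto
  next
    case (step y y')
    have y'T: "y' \<in> V - T" and Eyy: "E y y'" and yC: "y \<in> C" "y \<noteq> v" using step by auto
    have "y' \<noteq> v" using y'T T_def by auto
    moreover have "y' \<noteq> u"
    proof
      assume "y' = u"
      then have "E u y" using graph_sym[OF sg Eyy] by simp
      then show False using uv yC by auto
    qed
    then have "y' \<in> V - S" using y'T T_def by auto
    then have "y' \<in> C" using cmp_closed[OF w] yC Cw Eyy by metis
    ultimately show ?case by simp
  qed
  then show ?thesis unfolding cmp_def T_def by auto
qed




definition QQ :: "'a set \<Rightarrow> ('a \<Rightarrow> 'a \<Rightarrow> bool) \<Rightarrow> bool" where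
  "QQ V E \<longleftrightarrow> (\<forall>S1 S2. S1 \<in> min_psd_forcing_sets V E \<longrightarrow> S2 \<in> min_psd_forcing_sets V E \<longrightarrow>
     (\<exists>a b. S1 - S2 = {a} \<and> S2 - S1 = {b}) \<longrightarrow> (\<exists>a b. S1 - S2 = {a} \<and> S2 - S1 = {b} \<and> E a b))"

lemma comp_sub2: "C \<in> components_minus V E S \<Longrightarrow> C \<subseteq> V - S"
  using comps_iff cmp_sub by metis

lemma diff_swap1: "x \<notin> R \<Longrightarrow> x \<noteq> y \<Longrightarrow> insert x R - insert y R = {x}" by blast
lemma diff_swap2: "a \<in> S \<Longrightarrow> b \<in> S \<Longrightarrow> a \<noteq> b \<Longrightarrow> v \<notin> S \<Longrightarrow> insert v (S - {a}) - insert v (S - {b}) = {b}" by blast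

lemma QQ_D:
  assumes Q: "QQ V E" and m1: "S1 \<in> min_psd_forcing_sets V E" and m2: "S2 \<in> min_psd_forcing_sets V E"
    and d1: "S1 - S2 = {a}" and d2: "S2 - S1 = {b}"
  shows "E a b"
proof -
  have ex: "\<exists>a b. S1 - S2 = {a} \<and> S2 - S1 = {b}" using d1 d2 by (intro exI conjI)
  have "\<exists>a b. S1 - S2 = {a} \<and> S2 - S1 = {b} \<and> E a b"
    using Q[unfolded QQ_def, rule_format, OF m1 m2 ex] .
  then obtain a' b' where h: "S1 - S2 = {a'}" "S2 - S1 = {b'}" "E a' b'" by (elim exE conjE)
  have "a = a'" using h(1) d1 by simp
  moreover have "b = b'" using h(2) d2 by simp
  ultimately show ?thesis using h(3) by simp
qed

lemma noA:
  assumes sg: "simple_graph V E" and Q: "QQ V E" and S: "S \<in> min_psd_forcing_sets V E"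
    and u: "u \<in> S" and C1: "C1 \<in> components_minus V E S" and C2: "C2 \<in> components_minus V E S"
    and u1: "{x. E u x} \<inter> C1 = {v1}" and u2: "{x. E u x} \<inter> C2 = {v2}" and ne: "v1 \<noteq> v2"
  shows False
proof -
  have m1: "insert v1 (S - {u}) \<in> min_psd_forcing_sets V E" using swap_min[OF sg S u C1 u1] .
  have m2: "insert v2 (S - {u}) \<in> min_psd_forcing_sets V E" using swap_min[OF sg S u C2 u2] .
  have v1S: "v1 \<in> V - S" using u1 comp_sub2[OF C1] by auto
  have v2S: "v2 \<in> V - S" using u2 comp_sub2[OF C2] by auto
  have d1: "insert v1 (S - {u}) - insert v2 (S - {u}) = {v1}" using diff_swap1 v1S ne by blast
  have d2: "insert v2 (S - {u}) - insert v1 (S - {u}) = {v2}" using diff_swap1 v2S ne by blast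
  have "E v1 v2" using QQ_D[OF Q m1 m2 d1 d2] .
  obtain w where w: "w \<in> V - S" and Cw: "C1 = cmp V E S w" using C1 comps_iff by metis
  have v1C: "v1 \<in> C1" using u1 by blast
  have "v2 \<in> cmp V E S w" using cmp_closed[where x=v1 and y=v2 and V=V and S=S and E=E and w=w] w v2S \<open>E v1 v2\<close> v1C Cw by simp
  then have v2C: "v2 \<in> C1" using Cw by simp
  have "E u v2" using u2 by blast
  then have "v2 \<in> {x. E u x} \<inter> C1" using v2C by simp
  then show False using u1 ne by simp
qed

lemma noB:
  assumes sg: "simple_graph V E" and Q: "QQ V E" and S: "S \<in> min_psd_forcing_sets V E"
    and w1: "w1 \<in> S" and w2: "w2 \<in> S" and ne: "w1 \<noteq> w2" and C: "C \<in> components_minus V E S"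
    and u1: "{x. E w1 x} \<inter> C = {v}" and u2: "{x. E w2 x} \<inter> C = {v}"
  shows "E w1 w2"
proof -
  have m1: "insert v (S - {w1}) \<in> min_psd_forcing_sets V E" using swap_min[OF sg S w1 C u1] .
  have m2: "insert v (S - {w2}) \<in> min_psd_forcing_sets V E" using swap_min[OF sg S w2 C u2] .
  have vS: "v \<in> V - S" using u1 comp_sub2[OF C] by auto
  have d1: "insert v (S - {w1}) - insert v (S - {w2}) = {w2}" using diff_swap2[OF w1 w2 ne] vS by blast
  have d2: "insert v (S - {w2}) - insert v (S - {w1}) = {w1}" using diff_swap2[OF w2 w1 ne[symmetric]] vS by blast
  have "E w2 w1" using QQ_D[OF Q m1 m2 d1 d2] .
  then show ?thesis by (rule graph_sym[OF sg])
qed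

lemma iso_comp:
  assumes sg: "simple_graph V E" and v: "v \<in> V - S" and N: "{y. E v y} \<subseteq> S"
  shows "{v} \<in> components_minus V E S"
  using comps_iff cmp_isolated[where E=E and v=v and S=S and V=V, OF N] v by metis

lemma clique_at:
  assumes sg: "simple_graph V E" and Q: "QQ V E" and S: "S \<in> min_psd_forcing_sets V E"
    and v: "v \<in> V - S" and N: "{y. E v y} \<subseteq> S"
    and e1: "E v w1" and e2: "E v w2" and ne: "w1 \<noteq> w2"
  shows "E w1 w2"
proof -
  have C: "{v} \<in> components_minus V E S" using iso_comp[OF sg v N] .
  have "E w1 v" by (rule graph_sym[OF sg e1])
  have "E w2 v" by (rule graph_sym[OF sg e2])
  have "{x. E w1 x} \<inter> {v} = {v}" "{x. E w2 x} \<inter> {v} = {v}" using \<open>E w1 v\<close> \<open>E w2 v\<close> by auto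
  then show ?thesis using noB[OF sg Q S _ _ ne C] N e1 e2 by auto
qed

lemma min_finite: "simple_graph V E \<Longrightarrow> S \<in> min_psd_forcing_sets V E \<Longrightarrow> finite S \<and> S \<subseteq> V"
  unfolding min_psd_forcing_sets_def psd_forcing_set_def simple_graph_def
  using finite_subset by blast

lemma comp_finite: "simple_graph V E \<Longrightarrow> C \<in> components_minus V E S \<Longrightarrow> finite C"
  using comp_sub2 finite_subset simple_graph_def by (metis Diff_subset order_trans)

lemma nbr_closed:
  assumes sg: "simple_graph V E" and Q: "QQ V E"
  shows "S \<in> min_psd_forcing_sets V E \<Longrightarrow> v \<in> V - S \<Longrightarrow> {y. E v y} \<subseteq> S \<Longrightarrow> E v w \<Longrightarrow> E w y
     \<Longrightarrow> y \<notin> S \<Longrightarrow> y = v"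
proof (rule ccontr)
  define P where "P k \<longleftrightarrow> (\<exists>S v w y. S \<in> min_psd_forcing_sets V E \<and> v \<in> V - S \<and> {y. E v y} \<subseteq> S
     \<and> E v w \<and> E w y \<and> y \<notin> S \<and> y \<noteq> v \<and> card (cmp V E S y) = k)" for k
  assume "S \<in> min_psd_forcing_sets V E" "v \<in> V - S" "{y. E v y} \<subseteq> S" "E v w" "E w y" "y \<notin> S" "y \<noteq> v"
  then have "P (card (cmp V E S y))" unfolding P_def by blast
  then obtain k where Pk: "P k" and lst: "\<And>m. m < k \<Longrightarrow> \<not> P m"
    using exists_least_iff[of P] by blast
  then obtain S v w y where S: "S \<in> min_psd_forcing_sets V E" and v: "v \<in> V - S"
    and N: "{y. E v y} \<subseteq> S" and vw: "E v w" and wy: "E w y" and yS: "y \<notin> S" and yv: "y \<noteq> v"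
    and k: "card (cmp V E S y) = k" unfolding P_def by blast
  define C' where "C' = cmp V E S y"
  have yV: "y \<in> V - S" using graph_V[OF sg wy] yS by auto
  have C': "C' \<in> components_minus V E S" using comps_iff yV C'_def by metis
  have fs: "psd_forcing_set V E S" using S min_psd_forcing_sets_def by auto
  obtain a b where a: "a \<in> S" and ab: "{x. E a x} \<inter> C' = {b}"
    using forcing_comp_force[OF sg fs C'] by blast
  have Cv: "{v} \<in> components_minus V E S" using iso_comp[OF sg v N] .
  have vC': "v \<notin> C'"
  proof
    assume "v \<in> C'"
    then have "cmp V E S v = C'" using cmp_eq[OF sg] C'_def by metis
    then have "C' = {v}" using cmp_isolated[where E=E and v=v and S=S and V=V, OF N] by simp
    then show False using cmp_self[of y V E S] C'_def yv by auto
  qed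
  have bC': "b \<in> C'" using ab by auto
  have bv: "b \<noteq> v" using bC' vC' by auto
  have wS: "w \<in> S" using N vw by auto
  have Ewv: "E w v" using graph_sym[OF sg vw] .
  show False
  proof (cases "E a v")
    case True
    have "{x. E a x} \<inter> {v} = {v}" using True by auto
    then show False using noA[OF sg Q S a Cv C' _ ab bv[symmetric]] by simp
  next
    case False
    have "\<exists>y'. E w y' \<and> y' \<in> C' \<and> y' \<noteq> b"
    proof (cases "y = b")
      case False
      then show ?thesis using wy cmp_self[of y V E S] C'_def by auto
    next
      case True
      have "{x. E w x} \<inter> C' \<noteq> {b}"
      proof
        assume wb: "{x. E w x} \<inter> C' = {b}"
        have "{x. E w x} \<inter> {v} = {v}" using Ewv by auto
        then show False using noA[OF sg Q S wS Cv C' _ wb bv[symmetric]] by simp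
      qed
      moreover have "b \<in> {x. E w x} \<inter> C'" using True wy bC' by auto
      ultimately show ?thesis by blast
    qed
    then obtain y' where wy': "E w y'" and y'C: "y' \<in> C'" and y'b: "y' \<noteq> b" by blast
    define T where "T = insert b (S - {a})"
    have T: "T \<in> min_psd_forcing_sets V E" using swap_min[OF sg S a C' ab] T_def by simp
    have vT: "v \<in> V - T" using v bv T_def by auto
    have NT: "{y. E v y} \<subseteq> T"
    proof
      fix x assume "x \<in> {y. E v y}"
      then have Evx: "E v x" by simp
      then have "x \<in> S" using N by auto
      moreover have "x \<noteq> a"
      proof
        assume "x = a"
        then have "E a v" using graph_sym[OF sg Evx] by simp
        then show False using False by simp
      qed
      ultimately show "x \<in> T" using T_def by simp
    qed
    have y'S: "y' \<in> V - S" using y'C comp_sub2[OF C'] by auto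
    have y'T: "y' \<notin> T" using y'S y'b T_def by auto
    have y'v: "y' \<noteq> v" using y'C vC' by auto
    have sub: "cmp V E T y' \<subseteq> C' - {b}" using shrink[OF sg a C' ab y'C y'b] T_def by simp
    have "card (cmp V E T y') < card C'"
      using psubset_card_mono[OF comp_finite[OF sg C']] sub bC' by blast
    then have lt: "card (cmp V E T y') < k" using k C'_def by simp
    have "P (card (cmp V E T y'))"
      unfolding P_def using T vT NT vw wy' y'T y'v by blast
    then show False using lst lt by blast
  qed
qed

lemma exists_min:
  assumes sg: "simple_graph V E"
  shows "\<exists>S. S \<in> min_psd_forcing_sets V E"
proof -
  have "psd_forcing_set V E V" unfolding psd_forcing_set_def by blast
  then have ex: "\<exists>k S. psd_forcing_set V E S \<and> card S = k" by blast
  have "\<exists>S. psd_forcing_set V E S \<and> card S = Z_plus V E"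
    unfolding Z_plus_def using LeastI_ex[OF ex] .
  then show ?thesis unfolding min_psd_forcing_sets_def by blast
qed

lemma Z_le:
  assumes "psd_forcing_set V E S" shows "Z_plus V E \<le> card S"
  unfolding Z_plus_def using assms by (intro Least_le) blast

lemma complete_of_Q:
  assumes cg: "connected_graph V E" and Q: "QQ V E"
  shows "\<forall>x\<in>V. \<forall>y\<in>V. x \<noteq> y \<longrightarrow> E x y"
proof (cases "\<exists>x0 y0. E x0 y0")
  case False
  then show ?thesis
  proof (intro ballI impI)
    fix x y assume "x \<in> V" "y \<in> V" "x \<noteq> y"
    then have "reach_in V E x y" using cg connected_graph_def by metis
    then show "E x y" using False \<open>x \<noteq> y\<close> unfolding reach_in_def
      by (induction rule: rtranclp_induct) auto
  qed
next
  case True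
  have sg: "simple_graph V E" using cg connected_graph_def by metis
  have finV: "finite V" using sg simple_graph_def by metis
  obtain x0 y0 where e0: "E x0 y0" using True by blast
  have x0V: "x0 \<in> V" and y0V: "y0 \<in> V" using graph_V[OF sg e0] by auto
  have xy0: "x0 \<noteq> y0" using e0 graph_irr[OF sg] by metis
  have Nx0: "{y. E x0 y} \<subseteq> V - {x0}" using graph_V[OF sg] graph_irr[OF sg] by blast
  have "psd_force_step V E (V - {x0}) V"
  proof -
    have "{x0} \<in> components_minus V E (V - {x0})"
      using iso_comp[OF sg _ Nx0] x0V by simp
    moreover have "{x. E y0 x} \<inter> {x0} = {x0}" using graph_sym[OF sg e0] by auto
    moreover have "y0 \<in> V - {x0}" using y0V xy0 by auto
    moreover have "V = insert x0 (V - {x0})" using x0V by auto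
    ultimately show ?thesis unfolding psd_force_step_def by blast
  qed
  then have "psd_forcing_set V E (V - {x0})" unfolding psd_forcing_set_def by blast
  then have Zl: "Z_plus V E < card V" using Z_le finV x0V
    by (metis card_Diff1_less le_less_trans)
  obtain S0 where S0: "S0 \<in> min_psd_forcing_sets V E" using exists_min[OF sg] by blast
  have "card S0 < card V" using S0 Zl unfolding min_psd_forcing_sets_def by simp
  then obtain w0 where w0: "w0 \<in> V - S0" using min_finite[OF sg S0] by (metis Diff_iff less_irrefl subsetI subset_antisym)
  define P where "P k \<longleftrightarrow> (\<exists>S C. S \<in> min_psd_forcing_sets V E \<and> C \<in> components_minus V E S \<and> card C = k)" for k
  have "P (card (cmp V E S0 w0))" unfolding P_def using S0 w0 comps_iff by metis
  then obtain k where Pk: "P k" and lst: "\<And>m. m < k \<Longrightarrow> \<not> P m"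
    using exists_least_iff[of P] by blast
  then obtain S C where S: "S \<in> min_psd_forcing_sets V E" and C: "C \<in> components_minus V E S"
    and k: "card C = k" unfolding P_def by blast
  have fs: "psd_forcing_set V E S" using S min_psd_forcing_sets_def by auto
  obtain u v where u: "u \<in> S" and uv: "{x. E u x} \<inter> C = {v}"
    using forcing_comp_force[OF sg fs C] by blast
  have CV: "C = {v}"
  proof (rule ccontr)
    assume "C \<noteq> {v}"
    then obtain z where z: "z \<in> C" "z \<noteq> v" using uv by blast
    define T where "T = insert v (S - {u})"
    have T: "T \<in> min_psd_forcing_sets V E" using swap_min[OF sg S u C uv] T_def by simp
    have zT: "z \<in> V - T" using z comp_sub2[OF C] T_def u by auto
    have sub: "cmp V E T z \<subseteq> C - {v}" using shrink[OF sg u C uv z] T_def by simp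
    have "card (cmp V E T z) < card C"
      using psubset_card_mono[OF comp_finite[OF sg C]] sub uv by blast
    moreover have "P (card (cmp V E T z))" unfolding P_def using T zT comps_iff by metis
    ultimately show False using lst k by blast
  qed
  have vS: "v \<in> V - S" using CV comp_sub2[OF C] by auto
  obtain w where wS: "w \<in> V - S" and Cw: "C = cmp V E S w" using C comps_iff by metis
  have N: "{y. E v y} \<subseteq> S"
  proof
    fix y assume "y \<in> {y. E v y}"
    then have Evy: "E v y" by simp
    show "y \<in> S"
    proof (rule ccontr)
      assume "y \<notin> S"
      then have "y \<in> C" using cmp_closed[OF wS] CV Cw graph_V[OF sg Evy] Evy by auto
      then show False using CV Evy graph_irr[OF sg] by auto
    qed
  qed
  have vcl: "E v x" if "E v w'" "E w' x" "x \<noteq> v" for w' x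
  proof -
    define Sw where "Sw = insert v (S - {w'})"
    have w'S: "w' \<in> S" using N that(1) by auto
    have Cv: "{v} \<in> components_minus V E S" using iso_comp[OF sg vS N] .
    have "E w' v" by (rule graph_sym[OF sg that(1)])
    then have "{x. E w' x} \<inter> {v} = {v}" by auto
    then have Sw: "Sw \<in> min_psd_forcing_sets V E" using swap_min[OF sg S w'S Cv] Sw_def by simp
    have w'Sw: "w' \<in> V - Sw" using w'S vS Sw_def graph_V[OF sg that(1)] graph_irr[OF sg] that(1) by auto
    have NSw: "{y. E w' y} \<subseteq> Sw"
    proof
      fix y assume "y \<in> {y. E w' y}"
      then have e: "E w' y" by simp
      have "y \<notin> S \<Longrightarrow> y = v" using nbr_closed[OF sg Q S vS N that(1) e] by blast
      moreover have "y \<noteq> w'" using e graph_irr[OF sg] by metis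
      ultimately show "y \<in> Sw" unfolding Sw_def by blast
    qed
    have "E w' v" using graph_sym[OF sg that(1)] .
    have "E v x" using clique_at[OF sg Q Sw w'Sw NSw \<open>E w' v\<close> that(2)] that(3) by simp
    then show ?thesis .
  qed
  have all: "x = v \<or> E v x" if "x \<in> V" for x
  proof -
    have allr: "\<forall>x\<in>V. \<forall>y\<in>V. reach_in V E x y" using cg unfolding connected_graph_def by blast
    have "v \<in> V" using vS by blast
    then have "reach_in V E v x" using allr that by blast
    then show ?thesis unfolding reach_in_def
    proof (induction rule: rtranclp_induct)
      case base then show ?case by simp
    next
      case (step y z)
      then have Eyz: "E y z" by simp
      show ?case
      proof (cases "z = v")
        case True then show ?thesis by simp
      next
        case False
        show ?thesis using step(3)
        proof
          assume "y = v" then show ?thesis using Eyz by simp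
        next
          assume "E v y" then show ?thesis using vcl Eyz False by blast
        qed
      qed
    qed
  qed
  show ?thesis
  proof (intro ballI impI)
    fix x y assume xV: "x \<in> V" and yV: "y \<in> V" and ne: "x \<noteq> y"
    show "E x y"
    proof (cases "x = v")
      case True then show ?thesis using all[OF yV] ne by auto
    next
      case False
      note xv = False
      show ?thesis
      proof (cases "y = v")
        case True
        have "E v x" using all[OF xV] xv by simp
        then have "E x v" by (rule graph_sym[OF sg])
        then show ?thesis using True by simp
      next
        case False
        have "E v x" using all[OF xV] xv by simp
        moreover have "E v y" using all[OF yV] False by simp
        ultimately show ?thesis using clique_at[OF sg Q S vS N _ _ ne] by blast
      qed
    qed
  qed
qed




theorem proposition4p12:
  fixes V :: "'a set" and E :: "'a \<Rightarrow> 'a \<Rightarrow> bool"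
  assumes "connected_graph V E"
  shows "ZTE_plus V E = ZTS_plus V E \<longleftrightarrow> (\<exists>n. graph_iso V E (K_verts n) (K_edges n))"
proof
  have sg: "simple_graph V E" using assms connected_graph_def by metis
  assume eq: "ZTE_plus V E = ZTS_plus V E"
  have "QQ V E"
    unfolding QQ_def
  proof (intro allI impI)
    fix S1 S2 assume h: "S1 \<in> min_psd_forcing_sets V E" "S2 \<in> min_psd_forcing_sets V E"
      "\<exists>a b. S1 - S2 = {a} \<and> S2 - S1 = {b}"
    have "snd (ZTE_plus V E) S1 S2 = snd (ZTS_plus V E) S1 S2" using eq by simp
    then show "\<exists>a b. S1 - S2 = {a} \<and> S2 - S1 = {b} \<and> E a b"
      using h unfolding ZTE_plus_def ZTS_plus_def by simp
  qed
  then have comp: "\<forall>x\<in>V. \<forall>y\<in>V. x \<noteq> y \<longrightarrow> E x y" using complete_of_Q[OF assms] by blast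
  have finV: "finite V" using sg simple_graph_def by metis
  obtain f where f: "bij_betw f V {0..<card V}" using ex_bij_betw_finite_nat[OF finV] by blast
  have "\<forall>x\<in>V. \<forall>y\<in>V. E x y \<longleftrightarrow> K_edges (card V) (f x) (f y)"
  proof (intro ballI)
    fix x y assume x: "x \<in> V" and y: "y \<in> V"
    have "f x < card V" "f y < card V" using f x y bij_betwE by fastforce+
    moreover have "f x = f y \<longleftrightarrow> x = y" using f x y bij_betw_imp_inj_on inj_on_eq_iff by metis
    moreover have "E x y \<longleftrightarrow> x \<noteq> y" using comp x y graph_irr[OF sg] by metis
    ultimately show "E x y \<longleftrightarrow> K_edges (card V) (f x) (f y)" unfolding K_edges_def by blast
  qed
  then show "\<exists>n. graph_iso V E (K_verts n) (K_edges n)"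
    unfolding graph_iso_def K_verts_def using f by blast
next
  have sg: "simple_graph V E" using assms connected_graph_def by metis
  assume "\<exists>n. graph_iso V E (K_verts n) (K_edges n)"
  then obtain n f where f: "bij_betw f V {0..<n}" and iso: "\<forall>x\<in>V. \<forall>y\<in>V. E x y \<longleftrightarrow> K_edges n (f x) (f y)"
    unfolding graph_iso_def K_verts_def by blast
  have comp: "E x y" if "x \<in> V" "y \<in> V" "x \<noteq> y" for x y
  proof -
    have "f x \<noteq> f y" using f that bij_betw_imp_inj_on inj_on_eq_iff by metis
    moreover have "f x < n" "f y < n" using f that bij_betwE by fastforce+
    ultimately show ?thesis using iso that unfolding K_edges_def by blast
  qed
  have "(\<lambda>S1 S2. S1 \<in> min_psd_forcing_sets V E \<and> S2 \<in> min_psd_forcing_sets V E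
       \<and> (\<exists>v1 v2. S1 - S2 = {v1} \<and> S2 - S1 = {v2})) =
     (\<lambda>S1 S2. S1 \<in> min_psd_forcing_sets V E \<and> S2 \<in> min_psd_forcing_sets V E
       \<and> (\<exists>v1 v2. S1 - S2 = {v1} \<and> S2 - S1 = {v2} \<and> E v1 v2))"
  proof (intro ext iffI)
    fix S1 S2
    assume h: "S1 \<in> min_psd_forcing_sets V E \<and> S2 \<in> min_psd_forcing_sets V E
       \<and> (\<exists>v1 v2. S1 - S2 = {v1} \<and> S2 - S1 = {v2})"
    then obtain a b where ab: "S1 - S2 = {a}" "S2 - S1 = {b}" by blast
    have "S1 \<subseteq> V" "S2 \<subseteq> V" using h min_finite[OF sg] by blast+
    then have "a \<in> V" "b \<in> V" "a \<noteq> b" using ab by blast+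
    then have "E a b" using comp by blast
    then show "S1 \<in> min_psd_forcing_sets V E \<and> S2 \<in> min_psd_forcing_sets V E
       \<and> (\<exists>v1 v2. S1 - S2 = {v1} \<and> S2 - S1 = {v2} \<and> E v1 v2)" using h ab by blast
  qed blast
  then show "ZTE_plus V E = ZTS_plus V E" unfolding ZTE_plus_def ZTS_plus_def by simp
qed


end
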